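(* Let $F=(F_0,F_1,F_2)$ be a gapset filtration of genus $g\ge2$ and depth at most $3$ (padded with empty sets). Let $\alpha_1,\alpha_2$ be the maps on gapset filtrations $E=(E_0,E_1,E_2)$ of depth at most $3$ and multiplicity $k$ given by $\alpha_1(E)=(E_0\sqcup\{k\},E_1,E_2)$ and $\alpha_2(E)=(E_0\sqcup\{k\},E_1\sqcup\{k\},E_2)$. Then \begin{itemize} \item $F=\alpha_1(E)$ for some gapset filtration $E$ of depth at most $3$ if and only if $\max F_0>\max F_1$; \item $F=\alpha_2(E)$ for some gapset filtration $E$ of depth at most $3$ if and only if $\max F_0=\max F_1>\max F_2$. \end{itemize}
   Context: A gapset is a finite set $G \subset \mathbb{N}_+$ such that for all $z \in G$, whenever $z=x+y$ with $x,y\in\mathbb{N}_+$, we have $x\in G$ or $y\in G$. Its multiplicity is the least $m\ge1$ with $m\notin G$, its genus is $|G|$, and its depth is $\lceil c/m\rceil$ where $c=\max G+1$ ($c=0$ if $G=\emptyset$). For $m\ge1$, an $m$-filtration is a sequence $(F_0,\dots,F_t)$ with $F_0=[1,m-1]\supseteq F_1\supseteq\dots\supseteq F_t$; it is a gapset filtration if $\bigcup_i(im+F_i)$ is a gapset, and its multiplicity, genus (equal to $\sum_i|F_i|$) and depth are those of that gapset. Convention: $\max\emptyset=0$. *)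

theory Defs
  imports Complex_Main
begin

definition maxz :: "nat set \<Rightarrow> nat" where
  "maxz S = (if S = {} then 0 else Max S)"

definition gapset :: "nat set \<Rightarrow> bool" where
  "gapset G \<longleftrightarrow> finite G \<and> 0 \<notin> G \<and>
     (\<forall>z\<in>G. \<forall>x y. 0 < x \<and> 0 < y \<and> z = x + y \<longrightarrow> x \<in> G \<or> y \<in> G)"

definition gs_multiplicity :: "nat set \<Rightarrow> nat" where
  "gs_multiplicity G = (LEAST m. 1 \<le> m \<and> m \<notin> G)"

definition gs_conductor :: "nat set \<Rightarrow> nat" where
  "gs_conductor G = (if G = {} then 0 else Max G + 1)"

definition gs_genus :: "nat set \<Rightarrow> nat" where
  "gs_genus G = card G"

definition gs_depth :: "nat set \<Rightarrow> nat" where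
  "gs_depth G = nat \<lceil>real (gs_conductor G) / real (gs_multiplicity G)\<rceil>"

definition m_filtration :: "nat \<Rightarrow> nat set list \<Rightarrow> bool" where
  "m_filtration m Fs \<longleftrightarrow> 1 \<le> m \<and> Fs \<noteq> [] \<and> Fs ! 0 = {1..m-1} \<and>
     (\<forall>i. Suc i < length Fs \<longrightarrow> Fs ! Suc i \<subseteq> Fs ! i)"

definition filt_set :: "nat \<Rightarrow> nat set list \<Rightarrow> nat set" where
  "filt_set m Fs = (\<Union>i<length Fs. (\<lambda>x. i * m + x) ` (Fs ! i))"

text \<open>The m of an m-filtration is determined by F_0 = [1,m-1].\<close>
definition filt_m :: "nat set list \<Rightarrow> nat" where
  "filt_m Fs = card (Fs ! 0) + 1"

definition gapset_filtration :: "nat set list \<Rightarrow> bool" where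
  "gapset_filtration Fs \<longleftrightarrow> (\<exists>m. m_filtration m Fs \<and> gapset (filt_set m Fs))"

definition filt_gapset :: "nat set list \<Rightarrow> nat set" where
  "filt_gapset Fs = filt_set (filt_m Fs) Fs"

definition filt_multiplicity :: "nat set list \<Rightarrow> nat" where
  "filt_multiplicity Fs = gs_multiplicity (filt_gapset Fs)"

definition filt_genus :: "nat set list \<Rightarrow> nat" where
  "filt_genus Fs = gs_genus (filt_gapset Fs)"

definition filt_depth :: "nat set list \<Rightarrow> nat" where
  "filt_depth Fs = gs_depth (filt_gapset Fs)"

definition alpha1 :: "nat set list \<Rightarrow> nat set list" where
  "alpha1 E = (let k = filt_multiplicity E in [E ! 0 \<union> {k}, E ! 1, E ! 2])"

definition alpha2 :: "nat set list \<Rightarrow> nat set list" where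
  "alpha2 E = (let k = filt_multiplicity E in [E ! 0 \<union> {k}, E ! 1 \<union> {k}, E ! 2])"

end

theory Submission
  imports Defs
begin

definition cnd :: "nat set \<Rightarrow> nat set \<Rightarrow> bool" where
  "cnd B C \<longleftrightarrow> (\<forall>a\<in>C. \<forall>b c. 0<b \<and> 0<c \<and> a=b+c \<longrightarrow> b\<in>B \<or> c\<in>B)"

lemma list3: "length F = 3 \<Longrightarrow> F = [F!0, F!1, F!2]"
  by (auto simp: numeral_3_eq_3 length_Suc_conv)

lemma fs3: "filt_set m [A,B,C] = A \<union> (\<lambda>x. m+x) ` B \<union> (\<lambda>x. 2*m+x) ` C"
proof -
  have "{..<length [A,B,C]} = {0,1,2::nat}" by auto
  thus ?thesis unfolding filt_set_def by (auto simp: mult_2)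
qed

lemma mf3: "m_filtration m [A,B,C] \<longleftrightarrow> 1 \<le> m \<and> A = {1..m-1} \<and> B \<subseteq> A \<and> C \<subseteq> B"
  unfolding m_filtration_def by (auto simp: less_Suc_eq nth_Cons')

lemma gap3:
  assumes "1 \<le> m" "A = {1..m-1}" "B \<subseteq> A" "C \<subseteq> B"
  shows "gapset (filt_set m [A,B,C]) \<longleftrightarrow> cnd B C"
proof
  assume g: "gapset (filt_set m [A,B,C])"
  show "cnd B C" unfolding cnd_def
  proof (intro ballI allI impI)
    fix a b c assume a: "a \<in> C" and bc: "0<b \<and> 0<c \<and> a=b+c"
    have "a \<in> A" using a assms(3,4) by blast
    hence am: "a < m" using assms(1,2) by auto
    have "2*m+a \<in> filt_set m [A,B,C]" using a by (simp add: fs3)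
    moreover have "2*m+a = (m+b) + (m+c)" using bc by simp
    ultimately have "m+b \<in> filt_set m [A,B,C] \<or> m+c \<in> filt_set m [A,B,C]"
      using g bc unfolding gapset_def by (metis add_gr_0)
    thus "b \<in> B \<or> c \<in> B" using am bc assms by (auto simp: fs3)
  qed
next
  assume c: "cnd B C"
  let ?G = "filt_set m [A,B,C]"
  have fA: "finite A" using assms(2) by simp
  have fB: "finite B" using fA assms(3) finite_subset by blast
  have fC: "finite C" using fB assms(4) finite_subset by blast
  have Alt: "\<And>t. t \<in> A \<Longrightarrow> 0 < t \<and> t < m" using assms(1,2) by auto
  have Blt: "\<And>t. t \<in> B \<Longrightarrow> 0 < t \<and> t < m" using Alt assms(3) by blast
  have Clt: "\<And>t. t \<in> C \<Longrightarrow> 0 < t \<and> t < m" using Blt assms(4) by blast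
  have mem: "\<And>z. z \<in> ?G \<longleftrightarrow> z \<in> A \<or> (\<exists>b\<in>B. z = m+b) \<or> (\<exists>c\<in>C. z = 2*m+c)"
    unfolding fs3 by blast
  show "gapset ?G"
    unfolding gapset_def
  proof (intro conjI ballI allI impI)
    show "finite ?G" using fA fB fC by (simp add: fs3)
    show "0 \<notin> ?G" unfolding mem using Alt Blt Clt by fastforce
  next
    fix z x y assume z: "z \<in> ?G" and xy: "0 < x \<and> 0 < y \<and> z = x + y"
    have inA: "\<And>t. 0 < t \<Longrightarrow> t < m \<Longrightarrow> t \<in> ?G" unfolding mem using assms(2) by simp
    show "x \<in> ?G \<or> y \<in> ?G"
    proof (cases "x < m \<or> y < m")
      case True thus ?thesis using inA xy by blast
    next
      case False
      define b where "b = x - m"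
      define c where "c = y - m"
      have b: "x = m+b" and cc: "y = m+c" using False b_def c_def by auto
      have z2: "z \<ge> 2*m" using b cc xy by simp
      have "\<not> z \<in> A" using z2 Alt by fastforce
      moreover have "\<not> (\<exists>b\<in>B. z = m+b)" using z2 Blt by fastforce
      ultimately obtain a where a: "a \<in> C" "z = 2*m+a" using z unfolding mem by blast
      hence abc: "a = b+c" using b cc xy by simp
      have am: "a \<in> B" using a assms(4) by blast
      show ?thesis
      proof (cases "b = 0")
        case True
        hence "y = m + a" using abc cc by simp
        thus ?thesis using am unfolding mem by blast
      next
        case b0: False
        show ?thesis
        proof (cases "c = 0")
          case True
          hence "x = m + a" using abc b by simp
          thus ?thesis using am unfolding mem by blast
        next
          case False
          hence "b \<in> B \<or> c \<in> B" using c a abc b0 unfolding cnd_def by blast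
          thus ?thesis using b cc unfolding mem by blast
        qed
      qed
    qed
  qed
qed

lemma gf3:
  "gapset_filtration [A,B,C] \<longleftrightarrow> (\<exists>m. 1 \<le> m \<and> A = {1..m-1} \<and> B \<subseteq> A \<and> C \<subseteq> B \<and> cnd B C)"
  unfolding gapset_filtration_def mf3 using gap3 by blast

lemma mult3:
  assumes "1 \<le> m" "A = {1..m-1}" "B \<subseteq> A" "C \<subseteq> B"
  shows "filt_multiplicity [A,B,C] = m" and "filt_depth [A,B,C] \<le> 3"
proof -
  have fm: "filt_m [A,B,C] = m" using assms by (simp add: filt_m_def)
  have G: "filt_gapset [A,B,C] = A \<union> (\<lambda>x. m+x) ` B \<union> (\<lambda>x. 2*m+x) ` C"
    by (simp add: filt_gapset_def fm fs3)
  have "gs_multiplicity (filt_gapset [A,B,C]) = m"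
    unfolding gs_multiplicity_def
  proof (rule Least_equality)
    have "m \<notin> filt_gapset [A,B,C]" unfolding G using assms by force
    thus "1 \<le> m \<and> m \<notin> filt_gapset [A,B,C]" using assms by simp
  next
    fix y assume "1 \<le> y \<and> y \<notin> filt_gapset [A,B,C]"
    thus "m \<le> y" unfolding G using assms(1,2) by (cases "y < m") auto
  qed
  thus "filt_multiplicity [A,B,C] = m" by (simp add: filt_multiplicity_def)
  have Alt: "\<And>t. t \<in> A \<Longrightarrow> t < m" using assms(1,2) by auto
  have Blt: "\<And>t. t \<in> B \<Longrightarrow> t < m" using Alt assms(3) by blast
  have Clt: "\<And>t. t \<in> C \<Longrightarrow> t < m" using Blt assms(4) by blast
  have sub: "filt_gapset [A,B,C] \<subseteq> {..<3*m}"
  proof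
    fix x assume "x \<in> filt_gapset [A,B,C]"
    hence "x \<in> A \<or> (\<exists>b\<in>B. x = m+b) \<or> (\<exists>c\<in>C. x = 2*m+c)" unfolding G by blast
    thus "x \<in> {..<3*m}" using Alt Blt Clt by fastforce
  qed
  have "gs_conductor (filt_gapset [A,B,C]) \<le> 3*m"
  proof (cases "filt_gapset [A,B,C] = {}")
    case True thus ?thesis by (simp add: gs_conductor_def)
  next
    case False
    have "Max (filt_gapset [A,B,C]) < 3*m"
      using sub False by (meson Max_in finite_lessThan finite_subset lessThan_iff subsetD)
    thus ?thesis using False by (simp add: gs_conductor_def)
  qed
  hence "real (gs_conductor (filt_gapset [A,B,C])) / real m \<le> 3"
    using assms(1) by (simp add: divide_le_eq)
  hence "\<lceil>real (gs_conductor (filt_gapset [A,B,C])) / real m\<rceil> \<le> 3"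
    by (simp add: ceiling_le_iff)
  thus "filt_depth [A,B,C] \<le> 3"
    unfolding filt_depth_def gs_depth_def \<open>gs_multiplicity (filt_gapset [A,B,C]) = m\<close> by simp
qed

lemma ivl: "1 \<le> (k::nat) \<Longrightarrow> {1..k-1} \<union> {k} = {1..k}"
  by (cases k) (auto simp: atLeastAtMostSuc_conv)

lemma alpha1_eq: "filt_multiplicity [A,B,C] = k \<Longrightarrow> alpha1 [A,B,C] = [A \<union> {k}, B, C]"
  by (simp add: alpha1_def)

lemma alpha2_eq: "filt_multiplicity [A,B,C] = k \<Longrightarrow> alpha2 [A,B,C] = [A \<union> {k}, B \<union> {k}, C]"
  by (simp add: alpha2_def)

lemma maxz_int: "1 \<le> k \<Longrightarrow> maxz {1..k} = k"
proof -
  assume k: "1 \<le> k"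
  have "Max {1..k} = k" by (rule Max_eqI) (use k in auto)
  moreover have "{1..k} \<noteq> {}" using k by simp
  ultimately show ?thesis unfolding maxz_def by simp
qed

lemma maxz_le: "B \<subseteq> {1..n} \<Longrightarrow> maxz B \<le> n"
proof -
  assume a: "B \<subseteq> {1..n}"
  hence f: "finite B" using finite_subset by blast
  show ?thesis
  proof (cases "B = {}")
    case True thus ?thesis by (simp add: maxz_def)
  next
    case False
    have "Max B \<le> n" by (rule Max.boundedI) (use f False a in auto)
    thus ?thesis using False by (simp add: maxz_def)
  qed
qed

lemma maxz_ins: "B \<subseteq> {1..k} \<Longrightarrow> maxz (insert k B) = k"
proof -
  assume a: "B \<subseteq> {1..k}"
  hence f: "finite (insert k B)" using finite_subset by blast
  have "Max (insert k B) = k" by (rule Max_eqI) (use f a in auto)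
  thus ?thesis by (simp add: maxz_def)
qed

theorem mainTheorem13:
  fixes F :: "nat set list"
  assumes "length F = 3"
    and "gapset_filtration F"
    and "filt_genus F \<ge> 2"
    and "filt_depth F \<le> 3"
  shows "((\<exists>E. length E = 3 \<and> gapset_filtration E \<and> filt_depth E \<le> 3 \<and> F = alpha1 E)
            \<longleftrightarrow> maxz (F ! 0) > maxz (F ! 1))
       \<and> ((\<exists>E. length E = 3 \<and> gapset_filtration E \<and> filt_depth E \<le> 3 \<and> F = alpha2 E)
            \<longleftrightarrow> maxz (F ! 0) = maxz (F ! 1) \<and> maxz (F ! 1) > maxz (F ! 2))"
proof -
  define A B C where "A = F!0" "B = F!1" "C = F!2"
  have F: "F = [A,B,C]" using list3[OF assms(1)] A_B_C_def by simp
  obtain m where m: "1 \<le> m" "A = {1..m-1}" "B \<subseteq> A" "C \<subseteq> B" "cnd B C"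
    using assms(2) F gf3 by auto
  have fwd: "\<exists>k B' C'. 1 \<le> k \<and> B' \<subseteq> {1..k-1} \<and> C' \<subseteq> B' \<and> E = [{1..k-1},B',C']
        \<and> filt_multiplicity E = k" if hE: "length E = 3" "gapset_filtration E" for E
  proof -
    have E: "E = [E!0,E!1,E!2]" using list3 hE(1) by simp
    then obtain k where k: "1 \<le> k" "E!0 = {1..k-1}" "E!1 \<subseteq> E!0" "E!2 \<subseteq> E!1"
      using hE(2) gf3 by metis
    have "filt_multiplicity E = k" using mult3(1)[OF k] E by metis
    thus ?thesis using k E by metis
  qed
  have P1: "(\<exists>E. length E = 3 \<and> gapset_filtration E \<and> filt_depth E \<le> 3 \<and> F = alpha1 E)
            \<longleftrightarrow> maxz (F ! 0) > maxz (F ! 1)"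
  proof
    assume "\<exists>E. length E = 3 \<and> gapset_filtration E \<and> filt_depth E \<le> 3 \<and> F = alpha1 E"
    then obtain E where E: "length E = 3" "gapset_filtration E" "F = alpha1 E" by blast
    obtain k B' C' where k: "1 \<le> k" "B' \<subseteq> {1..k-1}" "C' \<subseteq> B'" "E = [{1..k-1},B',C']"
      "filt_multiplicity E = k" using fwd[OF E(1,2)] by blast
    have "F!0 = {1..k}" "F!1 = B'" using E(3) k(1,4,5) by (auto simp: alpha1_def)
    moreover have "maxz B' \<le> k - 1" using maxz_le k(2) by blast
    ultimately show "maxz (F ! 0) > maxz (F ! 1)" using k(1) maxz_int by simp
  next
    assume h: "maxz (F ! 0) > maxz (F ! 1)"
    have m2: "m \<ge> 2" using h m(1,2) F by (cases "m = 1") (auto simp: maxz_def)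
    have mA: "maxz A = m - 1" using m2 m(2) maxz_int by simp
    have nB: "m - 1 \<notin> B"
    proof
      assume "m - 1 \<in> B"
      hence "maxz (insert (m-1) B) = m-1" using maxz_ins m by blast
      moreover have "insert (m-1) B = B" using \<open>m - 1 \<in> B\<close> by blast
      ultimately show False using h F mA by simp
    qed
    define k where "k = m - 1"
    have k1: "1 \<le> k" using m2 k_def by simp
    have Bk: "B \<subseteq> {1..k-1}"
    proof
      fix x assume "x \<in> B"
      hence "x \<in> {1..m-1}" "x \<noteq> m-1" using m(2,3) nB by auto
      thus "x \<in> {1..k-1}" unfolding k_def by (simp, linarith)
    qed
    have mf: "1 \<le> k" "{1..k-1} = {1..k-1}" "B \<subseteq> {1..k-1}" "C \<subseteq> B"
      using k1 Bk m(4) by simp_all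
    have gE: "gapset_filtration [{1..k-1},B,C]"
      unfolding gf3 by (rule exI[of _ k]) (use mf(1,3,4) m(5) in simp)
    have mk: "filt_multiplicity [{1..k-1},B,C] = k"
      by (rule mult3(1)[of k]) (use k1 Bk m(4) in auto)
    have e1: "alpha1 [{1..k-1},B,C] = [{1..k-1} \<union> {k}, B, C]"
      using mk by (rule alpha1_eq)
    have kA: "{1..k} = A" using m(2) k_def by simp
    have "alpha1 [{1..k-1},B,C] = F" unfolding e1 ivl[OF k1] kA F by (rule refl)
    thus "\<exists>E. length E = 3 \<and> gapset_filtration E \<and> filt_depth E \<le> 3 \<and> F = alpha1 E"
      using gE mult3(2)[OF mf] by (intro exI[of _ "[{1..k-1},B,C]"]) simp
  qed
  have P2: "(\<exists>E. length E = 3 \<and> gapset_filtration E \<and> filt_depth E \<le> 3 \<and> F = alpha2 E)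
            \<longleftrightarrow> maxz (F ! 0) = maxz (F ! 1) \<and> maxz (F ! 1) > maxz (F ! 2)"
  proof
    assume "\<exists>E. length E = 3 \<and> gapset_filtration E \<and> filt_depth E \<le> 3 \<and> F = alpha2 E"
    then obtain E where E: "length E = 3" "gapset_filtration E" "F = alpha2 E" by blast
    obtain k B' C' where k: "1 \<le> k" "B' \<subseteq> {1..k-1}" "C' \<subseteq> B'" "E = [{1..k-1},B',C']"
      "filt_multiplicity E = k" using fwd[OF E(1,2)] by blast
    have "F!0 = {1..k}" "F!1 = insert k B'" "F!2 = C'" using E(3) k(1,4,5) by (auto simp: alpha2_def)
    moreover have "maxz C' \<le> k - 1"
    proof -
      have "C' \<subseteq> {1..k-1}" using k(2,3) by blast
      thus ?thesis by (rule maxz_le)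
    qed
    moreover have "maxz (insert k B') = k"
    proof -
      have "{1..k-1} \<subseteq> {1..(k::nat)}" by (intro subsetI) (simp, linarith)
      hence "B' \<subseteq> {1..k}" using k(2) by (rule order_trans[rotated])
      thus ?thesis by (rule maxz_ins)
    qed
    ultimately show "maxz (F ! 0) = maxz (F ! 1) \<and> maxz (F ! 1) > maxz (F ! 2)"
      using k(1) maxz_int by simp
  next
    assume h: "maxz (F ! 0) = maxz (F ! 1) \<and> maxz (F ! 1) > maxz (F ! 2)"
    have m2: "m \<ge> 2" using h m(1,2) F by (cases "m = 1") (auto simp: maxz_def)
    have mA: "maxz A = m - 1" using m2 m(2) maxz_int by simp
    have Bne: "B \<noteq> {}" using h F mA m2 by (auto simp: maxz_def)
    have "Max B \<in> B" using Bne m(2,3) by (meson Max_in finite_atLeastAtMost finite_subset)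
    hence yB: "m - 1 \<in> B" using h F mA Bne by (simp add: maxz_def)
    have nC: "m - 1 \<notin> C"
    proof
      assume "m - 1 \<in> C"
      have "C \<subseteq> {1..m-1}" using m(2,3,4) by blast
      hence "maxz (insert (m-1) C) = m-1" by (rule maxz_ins)
      moreover have "insert (m-1) C = C" using \<open>m - 1 \<in> C\<close> by blast
      ultimately show False using h F mA by simp
    qed
    define k where "k = m - 1"
    have k1: "1 \<le> k" using m2 k_def by simp
    have Bk: "B - {k} \<subseteq> {1..k-1}"
    proof
      fix x assume "x \<in> B - {k}"
      hence "x \<in> {1..m-1}" "x \<noteq> m-1" using m(2,3) k_def by auto
      thus "x \<in> {1..k-1}" unfolding k_def by (simp, linarith)
    qed
    have kC: "k \<notin> C" using nC k_def by simp
    have kB: "k \<in> B" using yB k_def by simp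
    have "C \<subseteq> B - {k}" using m(4) kC by blast
    hence mf: "1 \<le> k" "{1..k-1} = {1..k-1}" "B - {k} \<subseteq> {1..k-1}" "C \<subseteq> B - {k}"
      using k1 Bk by simp_all
    have "cnd (B - {k}) C"
      unfolding cnd_def
    proof (intro ballI allI impI)
      fix a b c assume a: "a \<in> C" and bc: "0<b \<and> 0<c \<and> a=b+c"
      have "a \<in> A" using a m(3,4) by blast
      hence "a \<le> m-1" using m(2) by simp
      hence "a \<le> k" unfolding k_def .
      moreover have "a \<noteq> k" using kC a by blast
      ultimately have "a < k" by (rule le_neq_implies_less)
      moreover have "b \<in> B \<or> c \<in> B" using m(5) a bc unfolding cnd_def by blast
      moreover have "b < k" "c < k" using bc \<open>a < k\<close> by linarith+
      ultimately show "b \<in> B - {k} \<or> c \<in> B - {k}" by blast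
    qed
    hence gE: "gapset_filtration [{1..k-1},B - {k},C]"
      unfolding gf3 by (intro exI[of _ k]) (use mf(1,3,4) \<open>cnd (B - {k}) C\<close> in simp)
    have mk: "filt_multiplicity [{1..k-1},B - {k},C] = k"
      by (rule mult3(1)[of k]) (use mf(1,3,4) in auto)
    have e1: "alpha2 [{1..k-1},B - {k},C] = [{1..k-1} \<union> {k}, (B - {k}) \<union> {k}, C]"
      using mk by (rule alpha2_eq)
    have kB': "(B - {k}) \<union> {k} = B" using kB by blast
    have kA: "{1..k} = A" using m(2) k_def by simp
    have "alpha2 [{1..k-1},B - {k},C] = F" unfolding e1 ivl[OF k1] kA kB' F by (rule refl)
    thus "\<exists>E. length E = 3 \<and> gapset_filtration E \<and> filt_depth E \<le> 3 \<and> F = alpha2 E"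
      using gE mult3(2)[OF mf] by (intro exI[of _ "[{1..k-1},B - {k},C]"]) simp
  qed
  show ?thesis using P1 P2 by blast
qed

end
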